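(* Consider the following decoding setting (all notation is fixed in the context). Let $t_j = |\mathcal{A}_j|$ be the number of users transmitting in sub-block $j$, and run the index-collision-resolution procedure with the estimate $\hat{t}_j = t_j$. Assume that (no $E_1$) $t_j \le T$, and that (no $E_2$) whenever, during this run, the decoder $D$ of $\mathcal{C}$ is applied to a vector of the form $[\mathbf{c} + \tilde{\mathbf{z}}_j/2^{\ell}] \bmod 2$ with $\mathbf{c}\in\mathcal{C}$ and $\ell$ a nonnegative integer, it outputs $\mathbf{c}$. Then: (i) the list $\mathcal{L}_j(t_j)$ contains all indices $u \in \{1,\dots,n_p\}$ that were transmitted exactly once in sub-block $j$ (i.e., $|\{i\in\mathcal{A}_j : u_i = u\}| = 1$); (ii) $\hat{\mathbf{z}}_j(t_j) = \mathbf{z}_j$.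
   Context: Codes. Let $\mathbf{H}\in\{0,1\}^{m_p\times n_p}$ be a parity-check matrix of a binary linear code $\mathcal{C}_{\mathrm{aux}}$ of length $n_p$ with minimum Hamming distance $d$, and let $T=\lfloor (d-1)/2\rfloor$; denote the $u$-th column of $\mathbf{H}$ by $\mathbf{h}_u$. Let $\mathbf{G}\in\{0,1\}^{m_p\times n}$ be a generator matrix (full row rank) of a binary linear code $\mathcal{C}$ of length $n$ and dimension $m_p$. For $u\in\{1,\dots,n_p\}$ put $\mathbf{c}(u) = \mathbf{h}_u^T\mathbf{G} \bmod 2$ and define the real signal $\mathbf{x}(u)\in\mathbb{R}^n$ componentwise by $\mathbf{x}(u)_k = 2a(\mathbf{c}(u)_k - 1/2)$, where $a>0$ is a fixed constant. Channel. In sub-block $j$, a finite set $\mathcal{A}_j$ of users transmits; user $i\in\mathcal{A}_j$ chose an index $u_i\in\{1,\dots,n_p\}$ and sends $\mathbf{x}_{i,j}=\mathbf{x}(u_i)$. The received vector is $\mathbf{y}_j = \sum_{i\in\mathcal{A}_j}\mathbf{x}(u_i) + \mathbf{z}_j$ with $\mathbf{z}_j\in\mathbb{R}^n$ a noise vector; put $\tilde{\mathbf{z}}_j = \mathbf{z}_j/(2a)$. Here "$\bmod 2$" on real vectors is componentwise reduction into $[0,2)$. Basic decoder $\Phi$. For $\mathbf{y}\in\mathbb{R}^n$ and integer $\hat t\ge 0$, $\Phi(\mathbf{y},\hat t)$ is computed as: form $\tilde{\mathbf{y}} = [\mathbf{y}/(2a) + \hat t/2]\bmod 2$; apply a decoder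 $D$ for $\mathcal{C}$ to $\tilde{\mathbf{y}}$, obtaining a codeword $\tilde{\mathbf{c}}$ (or a flagged error); recover the unique $\tilde{\mathbf{h}}\in\{0,1\}^{m_p}$ with $\tilde{\mathbf{h}}^T\mathbf{G}=\tilde{\mathbf{c}} \bmod 2$; apply the bounded-distance syndrome decoder of $\mathcal{C}_{\mathrm{aux}}$, which returns the (unique) set $S\subseteq\{1,\dots,n_p\}$ with $|S|\le T$ and $\sum_{u\in S}\mathbf{h}_u = \tilde{\mathbf{h}} \bmod 2$ if such a set exists, and flags an error otherwise. $\Phi(\mathbf{y},\hat t)$ is the returned set $S$ (a list of indices); if any step flags an error, $\Phi$ returns $\emptyset$ and flags an error. Index-collision-resolution (ICR) procedure for an estimate $\hat t_j$: set $\mathbf{y}^{(1)}_j=\mathbf{y}_j$, $\hat t^{(1)}_j=\hat t_j$, $\mathcal{L}^{(1)}=\Phi(\mathbf{y}^{(1)}_j,\hat t^{(1)}_j)$. For $\ell\ge1$: if $|\mathcal{L}^{(\ell)}|=\hat t^{(\ell)}_j$, stop and return $\mathcal{L}^{(1)},\dots,\mathcal{L}^{(\ell)}$, setting $\tau=\ell$; if $|\mathcal{L}^{(\ell)}|>\hat t^{(\ell)}_j$, return an error; if $|\mathcal{L}^{(\ell)}|<\hat t^{(\ell)}_j$, set $\hat t^{(\ell+1)}_j=(\hat t^{(\ell)}_j-|\mathcal{L}^{(\ell)}|)/2$, return an error if this is not an integer, and otherwise set $\mathbf{y}^{(\ell+1)}_j = \big(\mathbf{y}^{(\ell)}_j-\sum_{u\in\mathcal{L}^{(\ell)}}\mathbf{x}(u)\big)/2$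 and $\mathcal{L}^{(\ell+1)}=\Phi(\mathbf{y}^{(\ell+1)}_j,\hat t^{(\ell+1)}_j)$, and continue. If no error is returned, the outputs are $\mathcal{L}_j(\hat t_j)=\mathcal{L}^{(1)}\setminus\bigcup_{\ell=2}^{\tau}\mathcal{L}^{(\ell)}$ and $\hat{\mathbf{z}}_j(\hat t_j)=\mathbf{y}_j-\sum_{\ell=1}^{\tau}2^{\ell-1}\sum_{u\in\mathcal{L}^{(\ell)}}\mathbf{x}(u)$. *)

theory Defs
  imports "HOL-Analysis.Analysis" "HOL-Library.Z2"
begin

(* Binary vectors/matrices are over the field bit = GF(2) (HOL-Library.Z2), so "mod 2"
   on binary quantities is built in.  The index set {1..n_p} is the finite type 'p,
   coordinates {1..n} the finite type 'n, rows {1..m_p} the finite type 'm. *)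

definition hweight :: "bit^'p \<Rightarrow> nat" where
  "hweight x = card {i. x $ i \<noteq> 0}"

definition caux :: "bit^'p^'m \<Rightarrow> (bit^'p) set" where
  "caux H = {x. H *v x = 0}"

definition is_min_dist :: "bit^'p^'m \<Rightarrow> nat \<Rightarrow> bool" where
  "is_min_dist H d \<longleftrightarrow>
     (\<exists>x\<in>caux H. x \<noteq> 0 \<and> hweight x = d) \<and> (\<forall>x\<in>caux H. x \<noteq> 0 \<longrightarrow> d \<le> hweight x)"

definition code :: "bit^'n^'m \<Rightarrow> (bit^'n) set" where
  "code G = range (\<lambda>h. h v* G)"

definition bvec_real :: "bit^'n \<Rightarrow> real^'n" where
  "bvec_real c = (\<chi> k. of_bit (c $ k))"

definition rmod2 :: "real \<Rightarrow> real" where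
  "rmod2 r = r - 2 * of_int \<lfloor>r / 2\<rfloor>"

definition rmod2v :: "real^'n \<Rightarrow> real^'n" where
  "rmod2v v = (\<chi> k. rmod2 (v $ k))"

definition cw :: "bit^'n^'m \<Rightarrow> bit^'p^'m \<Rightarrow> 'p \<Rightarrow> bit^'n" where
  "cw G H u = column u H v* G"

definition xsig :: "bit^'n^'m \<Rightarrow> bit^'p^'m \<Rightarrow> real \<Rightarrow> 'p \<Rightarrow> real^'n" where
  "xsig G H a u = (\<chi> k. 2 * a * (of_bit (cw G H u $ k) - 1/2))"

definition dinput :: "real \<Rightarrow> real^'n \<Rightarrow> nat \<Rightarrow> real^'n" where
  "dinput a y t = rmod2v ((1 / (2 * a)) *\<^sub>R y + (\<chi> k. real t / 2))"

definition synd :: "bit^'p^'m \<Rightarrow> 'p set \<Rightarrow> bit^'m" where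
  "synd H S = (\<Sum>u\<in>S. column u H)"

(* basic decoder Phi; returns the empty set when an error is flagged.
   D returns None to flag an error. *)
definition phi :: "(real^'n \<Rightarrow> (bit^'n) option) \<Rightarrow> bit^'n^'m \<Rightarrow> bit^'p^'m \<Rightarrow> nat \<Rightarrow> real
                   \<Rightarrow> real^'n \<Rightarrow> nat \<Rightarrow> 'p set" where
  "phi D G H T a y t =
     (case D (dinput a y t) of
        None \<Rightarrow> {}
      | Some c \<Rightarrow>
          (if \<exists>!h. h v* G = c then
             (let h = (THE h. h v* G = c) in
               (if \<exists>!S. card S \<le> T \<and> synd H S = h
                then (THE S. card S \<le> T \<and> synd H S = h) else {}))
           else {}))"

(* the ICR procedure: returns the trace of iterations (y^(l), t^(l), L^(l)), l = 1..tau,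
   together with a flag that is True iff no error was returned *)
function icr :: "(real^'n \<Rightarrow> (bit^'n) option) \<Rightarrow> bit^'n^'m \<Rightarrow> bit^'p^'m \<Rightarrow> nat \<Rightarrow> real
                 \<Rightarrow> real^'n \<Rightarrow> nat \<Rightarrow> ((real^'n) \<times> nat \<times> 'p set) list \<times> bool" where
  "icr D G H T a y t =
     (let L = phi D G H T a y t in
      if card L = t then ([(y, t, L)], True)
      else if card L > t then ([(y, t, L)], False)
      else if odd (t - card L) then ([(y, t, L)], False)
      else (let r = icr D G H T a ((1/2) *\<^sub>R (y - (\<Sum>u\<in>L. xsig G H a u))) ((t - card L) div 2)
            in ((y, t, L) # fst r, snd r)))"
  by pat_completeness auto
termination
  by (relation "Wellfounded.measure (\<lambda>(D, G, H, T, a, y, t). t)") auto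

definition icr_list :: "((real^'n) \<times> nat \<times> 'p set) list \<Rightarrow> 'p set" where
  "icr_list tr = (snd (snd (hd tr))) - (\<Union>l\<in>{1..<length tr}. snd (snd (tr ! l)))"

definition icr_noise :: "bit^'n^'m \<Rightarrow> bit^'p^'m \<Rightarrow> real \<Rightarrow> real^'n
                        \<Rightarrow> ((real^'n) \<times> nat \<times> 'p set) list \<Rightarrow> real^'n" where
  "icr_noise G H a y tr =
     y - (\<Sum>l<length tr. (2 ^ l) *\<^sub>R (\<Sum>u\<in>snd (snd (tr ! l)). xsig G H a u))"

end

theory Submission
  imports Defs
begin

lemma vm_sum_rows: "(h::'a::comm_semiring_1^'m) v* (G::'a^'n^'m) = (\<Sum>i\<in>UNIV. (h$i) *s row i G)"
  by (simp add: vec_eq_iff vector_matrix_mult_def row_def sum_component mult.commute)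

lemma rank_inj:
  fixes G :: "bit^'n^'m"
  assumes "rank G = CARD('m)"
  shows "inj (\<lambda>h. h v* G)"
proof -
  let ?f = "\<lambda>i. row i G"
  let ?R = "range ?f"
  have R: "rows G = ?R" by (auto simp: rows_def)
  have fin: "finite ?R" by simp
  have dim: "vec.dim ?R = CARD('m)" using assms R by (simp add: row_rank_def_gen)
  have cle: "card ?R \<le> CARD('m)" using card_image_le[of UNIV ?f] by simp
  have ind: "vec.independent ?R"
    using vec.card_le_dim_spanning[of ?R ?R, OF subset_refl vec.span_superset fin] dim cle by simp
  have "card ?R = CARD('m)" using vec.dim_eq_card_independent[OF ind] dim by simp
  then have injf: "inj ?f" using inj_on_iff_eq_card[of UNIV ?f] by simp
  have ker: "c = 0" if c: "c v* G = 0" for c :: "bit^'m"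
  proof -
    define u where "u = (\<lambda>v. c $ inv ?f v)"
    have "(\<Sum>v\<in>?R. u v *s v) = (\<Sum>i\<in>UNIV. u (?f i) *s ?f i)"
      by (rule sum.reindex[OF injf, unfolded comp_def])
    also have "\<dots> = c v* G" unfolding vm_sum_rows u_def by (simp add: inv_f_f[OF injf])
    finally have "(\<Sum>v\<in>?R. u v *s v) = 0" using c by simp
    then have "\<forall>v\<in>?R. u v = 0" using ind vec.dependent_finite[OF fin] by blast
    then show "c = 0" unfolding u_def by (auto simp: vec_eq_iff inv_f_f[OF injf])
  qed
  show ?thesis
  proof (rule injI)
    fix x y assume "x v* G = y v* G"
    then have "(x - y) v* G = 0" by (simp add: vector_matrix_mult_diff_distrib)
    then show "x = y" using ker by (metis eq_iff_diff_eq_0)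
  qed
qed

lemma neg_bitvec: "-(v::bit^'k) = v"
  by (simp only: vec_eq_iff vector_uminus_component uminus_bit_def id_apply simp_thms)

lemma d_pos:
  fixes H :: "bit^'p^'m"
  assumes "is_min_dist H d" shows "d \<ge> 1"
proof -
  have "\<exists>x\<in>caux H. x \<noteq> 0 \<and> hweight x = d" using assms unfolding is_min_dist_def by (rule conjunct1)
  then obtain x :: "bit^'p" where x: "x \<noteq> 0" "hweight x = d" by auto
  from x(1) obtain i where "x $ i \<noteq> 0" by (metis vec_eq_iff zero_index)
  then have "{i. x $ i \<noteq> 0} \<noteq> {}" by auto
  then have "card {i. x $ i \<noteq> 0} > 0" by (simp add: card_gt_0_iff)
  then show ?thesis using x unfolding hweight_def by simp
qed

lemma synd_unique:
  fixes H :: "bit^'p^'m"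
  assumes dist: "is_min_dist H d"
    and c1: "card S1 \<le> (d - 1) div 2" and c2: "card S2 \<le> (d - 1) div 2"
    and eq: "synd H S1 = synd H S2"
  shows "S1 = S2"
proof (rule ccontr)
  assume ne: "S1 \<noteq> S2"
  let ?D = "(S1 - S2) \<union> (S2 - S1)"
  define x :: "bit^'p" where "x = (\<chi> i. if i \<in> ?D then 1 else 0)"
  have "H *v x = (\<Sum>i\<in>UNIV. (x$i) *s column i H)" by (rule matrix_mult_sum)
  also have "\<dots> = (\<Sum>i\<in>UNIV. if i \<in> ?D then column i H else 0)"
    by (rule sum.cong) (simp_all add: x_def)
  also have "\<dots> = (\<Sum>i\<in>?D. column i H)"
    by (simp add: sum.If_cases) (rule sum.cong, auto)
  also have "\<dots> = (\<Sum>i\<in>S1 - S2. column i H) + (\<Sum>i\<in>S2 - S1. column i H)"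
    by (rule sum.union_disjoint) auto
  also have "\<dots> = (\<Sum>i\<in>S1 - S2. column i H) - (\<Sum>i\<in>S2 - S1. column i H)"
    by (simp only: diff_conv_add_uminus neg_bitvec)
  also have "\<dots> = synd H S1 - synd H S2"
  proof -
    have "synd H S1 = (\<Sum>i\<in>S1 - S2. column i H) + (\<Sum>i\<in>S1 \<inter> S2. column i H)"
      unfolding synd_def using sum.subset_diff[of "S1 \<inter> S2" S1 "\<lambda>i. column i H"]
      by (simp add: Diff_Int2 Diff_Int_distrib Diff_Int Diff_cancel)
    moreover have "synd H S2 = (\<Sum>i\<in>S2 - S1. column i H) + (\<Sum>i\<in>S1 \<inter> S2. column i H)"
      unfolding synd_def using sum.subset_diff[of "S1 \<inter> S2" S2 "\<lambda>i. column i H"]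
      by (simp add: Diff_Int2 Int_commute Diff_Int_distrib Diff_Int Diff_cancel)
    ultimately show ?thesis by simp
  qed
  also have "\<dots> = 0" using eq by simp
  finally have "x \<in> caux H" unfolding caux_def by simp
  moreover have "x \<noteq> 0"
  proof -
    obtain i where "i \<in> ?D" using ne by blast
    then have "x $ i \<noteq> 0" unfolding x_def by simp
    then show ?thesis by auto
  qed
  ultimately have "d \<le> hweight x" using dist unfolding is_min_dist_def by blast
  moreover have "hweight x = card ?D" unfolding hweight_def x_def
    by (rule arg_cong[where f=card]) auto
  moreover have "card ?D \<le> card S1 + card S2"
  proof -
    have "card ?D \<le> card (S1 \<union> S2)" by (rule card_mono) auto
    then show ?thesis using card_Un_le[of S1 S2] by linarith
  qed
  moreover have "d \<ge> 1" using d_pos[OF dist] .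
  ultimately show False using c1 c2 by linarith
qed


lemma rmod2_period: "rmod2 (r + 2 * real m) = rmod2 r"
proof -
  have "(r + 2 * real m) / 2 = r / 2 + of_int (int m)" by simp
  then have "\<lfloor>(r + 2 * real m) / 2\<rfloor> = \<lfloor>r / 2\<rfloor> + int m" by (simp only: floor_add_int)
  then show ?thesis unfolding rmod2_def by simp
qed

lemma of_nat_bit: "(of_nat n :: bit) = (if odd n then 1 else 0)"
  by (subst Z2.bit_eq_iff, simp only: even_of_nat_iff, cases "even n", simp_all)

lemma bit_of_nat: "(b :: bit) = of_nat (if odd b then 1 else 0)"
  by (subst Z2.bit_eq_iff, simp only: even_of_nat_iff, cases "even b", simp_all)

lemma scalar_vm: "((s::'a::comm_semiring_1) *s h) v* (G::'a^'n^'m) = s *s (h v* G)"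
  by (simp add: vec_eq_iff vector_matrix_mult_def sum_distrib_left mult.assoc)

lemma sum_vm: "(\<Sum>v\<in>S. (f v :: 'a::comm_semiring_1^'m)) v* (G::'a^'n^'m) = (\<Sum>v\<in>S. f v v* G)"
proof (induction S rule: infinite_finite_induct)
  case (insert x F)
  then show ?case by (simp add: vector_matrix_left_distrib)
qed simp_all

lemma sum_odd_card: "(\<Sum>v\<in>(UNIV::'p::finite set). (if odd (cnt v) then 1 else 0::nat)) = card {v. odd (cnt v)}"
  by (simp add: sum.If_cases)

lemma sum_cnt_split: "(\<Sum>v\<in>(UNIV::'p::finite set). cnt v) = card {v. odd (cnt v)} + 2 * (\<Sum>v\<in>UNIV. cnt v div 2)"
proof -
  have "(\<Sum>v\<in>(UNIV::'p set). cnt v) = (\<Sum>v\<in>UNIV. (if odd (cnt v) then 1 else 0) + 2 * (cnt v div 2))"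
    by (rule sum.cong) auto
  also have "\<dots> = card {v. odd (cnt v)} + 2 * (\<Sum>v\<in>UNIV. cnt v div 2)"
    by (simp add: sum.distrib sum_odd_card sum_distrib_left)
  finally show ?thesis .
qed


definition Ycnt :: "bit^'n^'m \<Rightarrow> bit^'p^'m \<Rightarrow> real \<Rightarrow> real^'n \<Rightarrow> ('p \<Rightarrow> nat) \<Rightarrow> nat \<Rightarrow> real^'n" where
  "Ycnt G H a z cnt l = (\<Sum>v\<in>UNIV. real (cnt v) *\<^sub>R xsig G H a v) + (1 / 2 ^ l) *\<^sub>R z"

definition c0 :: "bit^'n^'m \<Rightarrow> bit^'p^'m \<Rightarrow> ('p \<Rightarrow> nat) \<Rightarrow> bit^'n" where
  "c0 G H cnt = (\<Sum>v\<in>UNIV. (of_nat (cnt v) :: bit) *s cw G H v)"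

lemma dinput_Ycnt:
  assumes apos: "a > 0"
  shows "dinput a (Ycnt G H a z cnt l) (\<Sum>v\<in>UNIV. cnt v)
       = rmod2v (bvec_real (c0 G H cnt) + (1 / 2 ^ l) *\<^sub>R ((1 / (2 * a)) *\<^sub>R z))"
  unfolding dinput_def rmod2v_def vec_eq_iff vec_lambda_beta
proof (intro allI)
  fix k
  define b where "b v = (if odd (cw G H v $ k) then 1 else 0 :: nat)" for v
  define N where "N = (\<Sum>v\<in>UNIV. cnt v * b v)"
  define e where "e = (1 / 2 ^ l) * ((1 / (2 * a)) * z $ k)"
  have xk: "xsig G H a v $ k = 2 * a * (real (b v) - 1/2)" for v
    by (simp add: xsig_def b_def)
  have "(1 / (2 * a)) * Ycnt G H a z cnt l $ k
      = (\<Sum>v\<in>UNIV. (1 / (2 * a)) * (real (cnt v) * (2 * a * (real (b v) - 1/2)))) + e"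
    by (simp add: Ycnt_def xk sum_component sum_distrib_left e_def algebra_simps)
  also have "\<dots> = (\<Sum>v\<in>UNIV. real (cnt v) * real (b v) - real (cnt v) / 2) + e"
    using apos by (intro arg_cong2[where f="(+)"] sum.cong refl) (simp add: field_simps)
  also have "\<dots> = real N - real (\<Sum>v\<in>UNIV. cnt v) / 2 + e"
    by (simp add: N_def sum_subtractf sum_divide_distrib)
  finally have e1: "(1 / (2 * a)) * Ycnt G H a z cnt l $ k + real (\<Sum>v\<in>UNIV. cnt v) / 2 = real N + e"
    by simp
  have cwk: "cw G H v $ k = of_nat (b v)" for v
    unfolding b_def by (rule bit_of_nat)
  have "c0 G H cnt $ k = (\<Sum>v\<in>UNIV. of_nat (cnt v) * of_nat (b v))"
    by (simp add: c0_def sum_component cwk)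
  also have "\<dots> = (of_nat N :: bit)"
    by (simp add: N_def of_nat_sum)
  finally have ck: "c0 G H cnt $ k = of_nat N" .
  have e2: "(bvec_real (c0 G H cnt) + (1 / 2 ^ l) *\<^sub>R ((1 / (2 * a)) *\<^sub>R z)) $ k = real (N mod 2) + e"
  proof -
    have ck': "c0 G H cnt $ k = (if odd N then 1 else 0)" using ck of_nat_bit by simp
    show ?thesis
      by (cases "odd N") (simp_all add: bvec_real_def ck' e_def odd_iff_mod_2_eq_one even_iff_mod_2_eq_zero)
  qed
  have "N = N mod 2 + 2 * (N div 2)" by simp
  then have "real N = real (N mod 2 + 2 * (N div 2))" by (rule arg_cong[where f=real])
  also have "\<dots> = real (N mod 2) + 2 * real (N div 2)" by (simp only: of_nat_add of_nat_mult of_nat_numeral)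
  finally have "real N = real (N mod 2) + 2 * real (N div 2)" .
  then have rm: "rmod2 (real N + e) = rmod2 (real (N mod 2) + e)"
    using rmod2_period[of "real (N mod 2) + e" "N div 2"] by (simp add: ac_simps)
  have L: "((1 / (2 * a)) *\<^sub>R Ycnt G H a z cnt l + (\<chi> k. real (\<Sum>v\<in>UNIV. cnt v) / 2)) $ k = real N + e"
    using e1 by simp
  show "rmod2 (((1 / (2 * a)) *\<^sub>R Ycnt G H a z cnt l + (\<chi> k. real (\<Sum>v\<in>UNIV. cnt v) / 2)) $ k)
     = rmod2 ((bvec_real (c0 G H cnt) + (1 / 2 ^ l) *\<^sub>R ((1 / (2 * a)) *\<^sub>R z)) $ k)"
    unfolding L e2 by (rule rm)
qed


lemma card_odd_le: "card {v. odd (cnt v)} \<le> (\<Sum>v\<in>(UNIV::'p::finite set). cnt v)"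
  using sum_cnt_split[of cnt] by linarith

lemma phi_Ycnt:
  fixes H :: "bit^'p^'m" and G :: "bit^'n^'m" and cnt :: "'p \<Rightarrow> nat"
  assumes dist: "is_min_dist H d" and rankG: "rank G = CARD('m)" and apos: "a > 0"
    and bound: "(\<Sum>v\<in>UNIV. cnt v) \<le> (d - 1) div 2"
    and hypD: "\<forall>c\<in>code G. \<forall>l'::nat. dinput a (Ycnt G H a z cnt l) (\<Sum>v\<in>UNIV. cnt v)
                  = rmod2v (bvec_real c + (1 / 2 ^ l') *\<^sub>R ((1 / (2 * a)) *\<^sub>R z))
               \<longrightarrow> D (dinput a (Ycnt G H a z cnt l) (\<Sum>v\<in>UNIV. cnt v)) = Some c"
  shows "phi D G H ((d - 1) div 2) a (Ycnt G H a z cnt l) (\<Sum>v\<in>UNIV. cnt v) = {v. odd (cnt v)}"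
proof -
  let ?S = "{v. odd (cnt v)}"
  define h0 where "h0 = synd H ?S"
  have "(\<Sum>v\<in>UNIV. (of_nat (cnt v)::bit) *s column v H) = (\<Sum>v\<in>UNIV. if odd (cnt v) then column v H else 0)"
    by (rule sum.cong) (simp_all add: of_nat_bit)
  also have "\<dots> = h0" by (simp add: h0_def synd_def sum.If_cases)
  finally have h0': "h0 = (\<Sum>v\<in>UNIV. (of_nat (cnt v)::bit) *s column v H)" by simp
  have c0eq: "c0 G H cnt = h0 v* G"
    unfolding c0_def h0' sum_vm scalar_vm cw_def ..
  have inc: "c0 G H cnt \<in> code G" unfolding code_def c0eq by simp
  have D: "D (dinput a (Ycnt G H a z cnt l) (\<Sum>v\<in>UNIV. cnt v)) = Some (c0 G H cnt)"
    using hypD inc dinput_Ycnt[OF apos] by blast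
  have injG: "inj (\<lambda>h. h v* G)" by (rule rank_inj[OF rankG])
  have ex1h: "\<exists>!h. h v* G = c0 G H cnt"
    using c0eq injG by (auto dest: injD)
  have theh: "(THE h. h v* G = c0 G H cnt) = h0"
    using ex1h c0eq by (auto intro: the1_equality)
  have cardS: "card ?S \<le> (d - 1) div 2" using card_odd_le[of cnt] bound by linarith
  have ex1S: "\<exists>!S. card S \<le> (d - 1) div 2 \<and> synd H S = h0"
    using cardS synd_unique[OF dist] unfolding h0_def by blast
  have theS: "(THE S. card S \<le> (d - 1) div 2 \<and> synd H S = h0) = ?S"
    by (rule the1_equality[OF ex1S]) (intro conjI cardS, simp add: h0_def)
  show ?thesis unfolding phi_def D using ex1h theh ex1S theS by simp
qed


definition goodD :: "(real^'n \<Rightarrow> (bit^'n) option) \<Rightarrow> bit^'n^'m \<Rightarrow> real \<Rightarrow> real^'n \<Rightarrow> ((real^'n) \<times> nat \<times> 'p set) list \<Rightarrow> bool" where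
  "goodD D G a z tr = (\<forall>(yl, tl, Ll) \<in> set tr.
                 \<forall>c \<in> code G. \<forall>l::nat.
                   dinput a yl tl = rmod2v (bvec_real c + (1 / 2 ^ l) *\<^sub>R ((1 / (2 * a)) *\<^sub>R z))
                   \<longrightarrow> D (dinput a yl tl) = Some c)"

lemma real_split: "real n = (if odd n then 1 else 0) + 2 * real (n div 2)"
proof -
  have "n = n mod 2 + 2 * (n div 2)" by simp
  then have "real n = real (n mod 2 + 2 * (n div 2))" by (rule arg_cong[where f=real])
  also have "\<dots> = real (n mod 2) + 2 * real (n div 2)" by (simp only: of_nat_add of_nat_mult of_nat_numeral)
  also have "real (n mod 2) = (if odd n then 1 else 0)"
    by (cases "odd n") (simp_all add: odd_iff_mod_2_eq_one even_iff_mod_2_eq_zero)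
  finally show ?thesis .
qed

lemma ystep:
  "Ycnt G H a z cnt l - (\<Sum>u\<in>{v. odd (cnt v)}. xsig G H a u)
     = 2 *\<^sub>R Ycnt G H a z (\<lambda>v. cnt v div 2) (Suc l)"
proof -
  have "(\<Sum>v\<in>UNIV. real (cnt v) *\<^sub>R xsig G H a v)
      = (\<Sum>v\<in>UNIV. (if odd (cnt v) then xsig G H a v else 0) + 2 *\<^sub>R (real (cnt v div 2) *\<^sub>R xsig G H a v))"
  proof (rule sum.cong)
    fix v
    show "real (cnt v) *\<^sub>R xsig G H a v = (if odd (cnt v) then xsig G H a v else 0) + 2 *\<^sub>R (real (cnt v div 2) *\<^sub>R xsig G H a v)"
      by (subst real_split[of "cnt v"]) (simp add: scaleR_add_left)
  qed simp
  also have "\<dots> = (\<Sum>u\<in>{v. odd (cnt v)}. xsig G H a u) + 2 *\<^sub>R (\<Sum>v\<in>UNIV. real (cnt v div 2) *\<^sub>R xsig G H a v)"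
    by (simp add: sum.distrib sum.If_cases scaleR_sum_right)
  finally have *: "(\<Sum>v\<in>UNIV. real (cnt v) *\<^sub>R xsig G H a v) = \<dots>" .
  have **: "(1 / 2 ^ l) *\<^sub>R z = 2 *\<^sub>R ((1 / 2 ^ Suc l) *\<^sub>R z)" by simp
  show ?thesis unfolding Ycnt_def * ** by (simp add: scaleR_add_right)
qed

lemma noise_cons:
  "icr_noise G H a y (e # rest)
     = (y - (\<Sum>u\<in>snd (snd e). xsig G H a u)) - 2 *\<^sub>R (y' - icr_noise G H a y' rest)"
proof -
  have "icr_noise G H a y (e # rest) = y - ((\<Sum>u\<in>snd (snd e). xsig G H a u)
        + (\<Sum>i<length rest. (2 ^ Suc i) *\<^sub>R (\<Sum>u\<in>snd (snd (rest ! i)). xsig G H a u)))"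
    unfolding icr_noise_def length_Cons sum.lessThan_Suc_shift by simp
  also have "(\<Sum>i<length rest. (2 ^ Suc i) *\<^sub>R (\<Sum>u\<in>snd (snd (rest ! i)). xsig G H a u))
      = 2 *\<^sub>R (y' - icr_noise G H a y' rest)"
    unfolding icr_noise_def by (simp add: scaleR_sum_right)
  finally show ?thesis by (simp add: algebra_simps)
qed


lemma icr_main:
  fixes H :: "bit^'p^'m" and G :: "bit^'n^'m" and cnt :: "'p \<Rightarrow> nat"
  assumes dist: "is_min_dist H d" and rankG: "rank G = CARD('m)" and apos: "a > 0"
  shows "(\<Sum>v\<in>UNIV. cnt v) \<le> (d - 1) div 2 \<Longrightarrow>
     goodD D G a z (fst (icr D G H ((d - 1) div 2) a (Ycnt G H a z cnt l) (\<Sum>v\<in>UNIV. cnt v))) \<Longrightarrow>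
     snd (icr D G H ((d - 1) div 2) a (Ycnt G H a z cnt l) (\<Sum>v\<in>UNIV. cnt v))
     \<and> fst (icr D G H ((d - 1) div 2) a (Ycnt G H a z cnt l) (\<Sum>v\<in>UNIV. cnt v)) \<noteq> []
     \<and> snd (snd (hd (fst (icr D G H ((d - 1) div 2) a (Ycnt G H a z cnt l) (\<Sum>v\<in>UNIV. cnt v))))) = {v. odd (cnt v)}
     \<and> (\<forall>e\<in>set (tl (fst (icr D G H ((d - 1) div 2) a (Ycnt G H a z cnt l) (\<Sum>v\<in>UNIV. cnt v)))). snd (snd e) \<subseteq> {v. 2 \<le> cnt v})
     \<and> (\<forall>e\<in>set (fst (icr D G H ((d - 1) div 2) a (Ycnt G H a z cnt l) (\<Sum>v\<in>UNIV. cnt v))). snd (snd e) \<subseteq> {v. 0 < cnt v})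
     \<and> icr_noise G H a (Ycnt G H a z cnt l) (fst (icr D G H ((d - 1) div 2) a (Ycnt G H a z cnt l) (\<Sum>v\<in>UNIV. cnt v))) = (1 / 2 ^ l) *\<^sub>R z"
proof (induction "\<Sum>v\<in>UNIV. cnt v" arbitrary: cnt l rule: less_induct)
  case less
  define T where "T = (d - 1) div 2"
  define t where "t = (\<Sum>v\<in>UNIV. cnt v)"
  define y where "y = Ycnt G H a z cnt l"
  define cnt' where "cnt' = (\<lambda>v. cnt v div 2)"
  define S0 where "S0 = {v. odd (cnt v)}"
  define y' where "y' = Ycnt G H a z cnt' (Suc l)"
  define t' where "t' = (\<Sum>v\<in>UNIV. cnt' v)"
  have tsplit: "t = card S0 + 2 * t'"
    unfolding t_def S0_def t'_def cnt'_def by (rule sum_cnt_split)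
  have hd0: "hd (fst (icr D G H T a y t)) = (y, t, phi D G H T a y t)"
    by (subst icr.simps) (simp add: Let_def)
  have ne0: "fst (icr D G H T a y t) \<noteq> []"
    by (subst icr.simps) (simp add: Let_def)
  have good: "goodD D G a z (fst (icr D G H T a y t))"
    using less.prems(2) unfolding T_def y_def t_def .
  have hdin: "(y, t, phi D G H T a y t) \<in> set (fst (icr D G H T a y t))"
    using hd0 ne0 by (metis list.set_sel(1))
  have hypD: "\<forall>c\<in>code G. \<forall>l'::nat. dinput a y t
                  = rmod2v (bvec_real c + (1 / 2 ^ l') *\<^sub>R ((1 / (2 * a)) *\<^sub>R z))
               \<longrightarrow> D (dinput a y t) = Some c"
    using good hdin unfolding goodD_def by fastforce
  have L: "phi D G H T a y t = S0"
    using phi_Ycnt[OF dist rankG apos, of cnt z l D] less.prems(1) hypD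
    unfolding T_def y_def t_def S0_def by blast
  have ydiff: "y - (\<Sum>u\<in>S0. xsig G H a u) = 2 *\<^sub>R y'"
    unfolding y_def S0_def y'_def cnt'_def by (rule ystep)
  then have yst: "(1/2) *\<^sub>R (y - (\<Sum>u\<in>S0. xsig G H a u)) = y'" by simp
  have S0pos: "S0 \<subseteq> {v. 0 < cnt v}" unfolding S0_def by (auto intro: odd_pos)
  have icr_eq: "icr D G H T a y t =
     (if card S0 = t then ([(y, t, S0)], True)
      else if card S0 > t then ([(y, t, S0)], False)
      else if odd (t - card S0) then ([(y, t, S0)], False)
      else (let r = icr D G H T a y' ((t - card S0) div 2)
            in ((y, t, S0) # fst r, snd r)))"
    by (subst icr.simps) (simp add: Let_def L yst)
  have half: "2 *\<^sub>R ((1 / 2 ^ Suc l) *\<^sub>R z) = (1 / 2 ^ l) *\<^sub>R z" by simp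
  have goal: "snd (icr D G H T a y t) \<and> fst (icr D G H T a y t) \<noteq> []
     \<and> snd (snd (hd (fst (icr D G H T a y t)))) = S0
     \<and> (\<forall>e\<in>set (tl (fst (icr D G H T a y t))). snd (snd e) \<subseteq> {v. 2 \<le> cnt v})
     \<and> (\<forall>e\<in>set (fst (icr D G H T a y t)). snd (snd e) \<subseteq> {v. 0 < cnt v})
     \<and> icr_noise G H a y (fst (icr D G H T a y t)) = (1 / 2 ^ l) *\<^sub>R z"
  proof (cases "t' = 0")
    case True
    then have tc: "card S0 = t" using tsplit by simp
    have r: "icr D G H T a y t = ([(y, t, S0)], True)" using icr_eq tc by simp
    have c0: "cnt' v = 0" for v using True unfolding t'_def by simp
    have y'0: "y' = (1 / 2 ^ Suc l) *\<^sub>R z" unfolding y'_def Ycnt_def c0 by simp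
    have "icr_noise G H a y [(y, t, S0)] = (y - (\<Sum>u\<in>S0. xsig G H a u)) - 2 *\<^sub>R (y' - icr_noise G H a y' [])"
      using noise_cons[of G H a y "(y, t, S0)" "[]" y'] by simp
    also have "\<dots> = 2 *\<^sub>R y'" by (simp add: icr_noise_def ydiff)
    finally have "icr_noise G H a y [(y, t, S0)] = (1 / 2 ^ l) *\<^sub>R z" using y'0 half by simp
    then show ?thesis using r S0pos by simp
  next
    case False
    have lt: "t' < t" using tsplit False by simp
    have le: "t' \<le> (d - 1) div 2" using tsplit less.prems(1) unfolding t_def by simp
    define r' where "r' = icr D G H T a y' t'"
    have r: "icr D G H T a y t = ((y, t, S0) # fst r', snd r')"
      using icr_eq tsplit False unfolding r'_def by (simp add: Let_def)
    have good': "goodD D G a z (fst r')"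
      using good unfolding r goodD_def by auto
    have IH: "snd r' \<and> fst r' \<noteq> []
     \<and> snd (snd (hd (fst r'))) = {v. odd (cnt' v)}
     \<and> (\<forall>e\<in>set (tl (fst r')). snd (snd e) \<subseteq> {v. 2 \<le> cnt' v})
     \<and> (\<forall>e\<in>set (fst r'). snd (snd e) \<subseteq> {v. 0 < cnt' v})
     \<and> icr_noise G H a y' (fst r') = (1 / 2 ^ Suc l) *\<^sub>R z"
      using less.hyps[of cnt' "Suc l"] lt le good'
      unfolding r'_def T_def y'_def t'_def t_def by blast
    have sub: "{v. 0 < cnt' v} = {v. 2 \<le> cnt v}" unfolding cnt'_def by auto
    have "icr_noise G H a y ((y, t, S0) # fst r') = (y - (\<Sum>u\<in>S0. xsig G H a u)) - 2 *\<^sub>R (y' - icr_noise G H a y' (fst r'))"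
      using noise_cons[of G H a y "(y, t, S0)" "fst r'" y'] by simp
    also have "\<dots> = (1 / 2 ^ l) *\<^sub>R z" using IH ydiff half by (simp add: algebra_simps)
    finally have nz: "icr_noise G H a y ((y, t, S0) # fst r') = (1 / 2 ^ l) *\<^sub>R z" .
    have allpos: "\<forall>e\<in>set (fst r'). snd (snd e) \<subseteq> {v. 0 < cnt v}"
    proof
      fix e assume "e \<in> set (fst r')"
      then have "snd (snd e) \<subseteq> {v. 2 \<le> cnt v}" using IH sub by blast
      then show "snd (snd e) \<subseteq> {v. 0 < cnt v}" by auto
    qed
    show ?thesis unfolding r using IH nz S0pos sub allpos by auto
  qed
  show ?case using goal unfolding T_def y_def t_def S0_def .
qed


theorem theorem1:
  fixes H :: "bit^'p^'m" and G :: "bit^'n^'m" and d :: nat and a :: real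
    and D :: "real^'n \<Rightarrow> (bit^'n) option"
    and A :: "'i set" and uu :: "'i \<Rightarrow> 'p" and z :: "real^'n"
  assumes dist: "is_min_dist H d"
    and rankG: "rank G = CARD('m)"
    and apos: "a > 0"
    and finA: "finite A"
    and noE1: "card A \<le> (d - 1) div 2"
    and noE2: "\<forall>(yl, tl, Ll) \<in> set (fst (icr D G H ((d - 1) div 2) a
                   ((\<Sum>i\<in>A. xsig G H a (uu i)) + z) (card A))).
                 \<forall>c \<in> code G. \<forall>l::nat.
                   dinput a yl tl = rmod2v (bvec_real c + (1 / 2 ^ l) *\<^sub>R ((1 / (2 * a)) *\<^sub>R z))
                   \<longrightarrow> D (dinput a yl tl) = Some c"
  shows "snd (icr D G H ((d - 1) div 2) a ((\<Sum>i\<in>A. xsig G H a (uu i)) + z) (card A))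
     \<and> {v. card {i\<in>A. uu i = v} = 1}
         \<subseteq> icr_list (fst (icr D G H ((d - 1) div 2) a ((\<Sum>i\<in>A. xsig G H a (uu i)) + z) (card A)))
     \<and> icr_noise G H a ((\<Sum>i\<in>A. xsig G H a (uu i)) + z)
         (fst (icr D G H ((d - 1) div 2) a ((\<Sum>i\<in>A. xsig G H a (uu i)) + z) (card A))) = z"
proof -
  define cnt where "cnt v = card {i\<in>A. uu i = v}" for v
  have sx: "(\<Sum>i\<in>A. xsig G H a (uu i)) = (\<Sum>v\<in>UNIV. real (cnt v) *\<^sub>R xsig G H a v)"
  proof -
    have "(\<Sum>i\<in>A. xsig G H a (uu i)) = (\<Sum>v\<in>UNIV. \<Sum>i\<in>{i. i \<in> A \<and> uu i = v}. xsig G H a (uu i))"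
      by (rule sum.group[OF finA, symmetric]) auto
    also have "\<dots> = (\<Sum>v\<in>UNIV. real (cnt v) *\<^sub>R xsig G H a v)"
    proof (rule sum.cong)
      fix v :: 'p
      have "(\<Sum>i\<in>{i. i \<in> A \<and> uu i = v}. xsig G H a (uu i)) = (\<Sum>i\<in>{i. i \<in> A \<and> uu i = v}. xsig G H a v)"
        by (rule sum.cong) auto
      also have "\<dots> = real (cnt v) *\<^sub>R xsig G H a v"
        unfolding cnt_def by (simp only: sum_constant_scaleR)
      finally show "(\<Sum>i\<in>{i. i \<in> A \<and> uu i = v}. xsig G H a (uu i)) = real (cnt v) *\<^sub>R xsig G H a v" .
    qed simp
    finally show ?thesis .
  qed
  have sc: "card A = (\<Sum>v\<in>UNIV. cnt v)"
  proof -
    have "card A = (\<Sum>i\<in>A. 1)" by simp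
    also have "\<dots> = (\<Sum>v\<in>UNIV. \<Sum>i\<in>{i. i \<in> A \<and> uu i = v}. 1)"
      by (rule sum.group[OF finA, symmetric]) auto
    also have "\<dots> = (\<Sum>v\<in>UNIV. cnt v)" by (simp add: cnt_def)
    finally show ?thesis .
  qed
  have yeq: "(\<Sum>i\<in>A. xsig G H a (uu i)) + z = Ycnt G H a z cnt 0"
    unfolding Ycnt_def sx by simp
  define tr where "tr = fst (icr D G H ((d - 1) div 2) a (Ycnt G H a z cnt 0) (\<Sum>v\<in>UNIV. cnt v))"
  have good: "goodD D G a z tr"
    using noE2 unfolding tr_def goodD_def yeq sc .
  have M: "snd (icr D G H ((d - 1) div 2) a (Ycnt G H a z cnt 0) (\<Sum>v\<in>UNIV. cnt v))
     \<and> tr \<noteq> []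
     \<and> snd (snd (hd tr)) = {v. odd (cnt v)}
     \<and> (\<forall>e\<in>set (tl tr). snd (snd e) \<subseteq> {v. 2 \<le> cnt v})
     \<and> (\<forall>e\<in>set tr. snd (snd e) \<subseteq> {v. 0 < cnt v})
     \<and> icr_noise G H a (Ycnt G H a z cnt 0) tr = (1 / 2 ^ 0) *\<^sub>R z"
    using icr_main[OF dist rankG apos, of cnt D z 0] noE1 good unfolding sc tr_def by blast
  have L: "{v. cnt v = 1} \<subseteq> icr_list tr"
  proof
    fix v assume v: "v \<in> {v. cnt v = 1}"
    then have "v \<in> snd (snd (hd tr))" using M by simp
    moreover have "v \<notin> snd (snd (tr ! l))" if "l \<in> {1..<length tr}" for l
    proof -
      have "tr ! l \<in> set (tl tr)"
        using that M by (cases tr) auto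
      then show ?thesis using M v by fastforce
    qed
    ultimately show "v \<in> icr_list tr" unfolding icr_list_def by blast
  qed
  have goal: "snd (icr D G H ((d - 1) div 2) a (Ycnt G H a z cnt 0) (\<Sum>v\<in>UNIV. cnt v))
     \<and> {v. cnt v = 1} \<subseteq> icr_list tr
     \<and> icr_noise G H a (Ycnt G H a z cnt 0) tr = z"
    using M L by (simp del: icr.simps)
  show ?thesis
    unfolding yeq sc using goal unfolding tr_def cnt_def .
qed

end
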